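(* Let $G$ be a locally finite graph and $F$ a subgraph of $G$. If $F$ is faithful to $G$, then the line graph $L(F)$ is faithful to the line graph $L(G)$.
   Context: $L(H)$ is the line graph of $H$ (vertices are edges of $H$, adjacent when sharing an endpoint); $L(F)$ is naturally a subgraph of $L(G)$. A ray is a one-way infinite path; two rays of a graph $H$ are equivalent in $H$ if for every finite $S\subseteq V(H)$ some component of $H-S$ contains tails of both; the classes are the ends of $H$. A subgraph $A$ of $B$ is faithful to $B$ if (i) every end of $B$ contains a ray of $A$, and (ii) any two rays of $A$ are equivalent in $A$ if and only if they are equivalent in $B$. *)

theory Defs
  imports Main
begin

type_synonym 'a graph = "'a set \<times> 'a set set"

definition verts :: "'a graph \<Rightarrow> 'a set" where "verts H = fst H"
definition edges :: "'a graph \<Rightarrow> 'a set set" where "edges H = snd H"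

definition is_graph :: "'a graph \<Rightarrow> bool" where
  "is_graph H \<longleftrightarrow> (\<forall>e\<in>edges H. \<exists>u v. u \<noteq> v \<and> e = {u, v} \<and> u \<in> verts H \<and> v \<in> verts H)"

definition locally_finite :: "'a graph \<Rightarrow> bool" where
  "locally_finite H \<longleftrightarrow> (\<forall>v\<in>verts H. finite {e\<in>edges H. v \<in> e})"

definition subgraph :: "'a graph \<Rightarrow> 'a graph \<Rightarrow> bool" where
  "subgraph A B \<longleftrightarrow> is_graph A \<and> is_graph B \<and> verts A \<subseteq> verts B \<and> edges A \<subseteq> edges B"

definition line_graph :: "'a graph \<Rightarrow> 'a set graph" where
  "line_graph H = (edges H, {{e, f} | e f. e \<in> edges H \<and> f \<in> edges H \<and> e \<noteq> f \<and> e \<inter> f \<noteq> {}})"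

definition del_verts :: "'a graph \<Rightarrow> 'a set \<Rightarrow> 'a graph" where
  "del_verts H S = (verts H - S, {e \<in> edges H. e \<inter> S = {}})"

definition adj :: "'a graph \<Rightarrow> 'a \<Rightarrow> 'a \<Rightarrow> bool" where
  "adj H x y \<longleftrightarrow> {x, y} \<in> edges H"

definition components :: "'a graph \<Rightarrow> 'a set set" where
  "components H = {{y. (adj H)\<^sup>*\<^sup>* x y} | x. x \<in> verts H}"

definition ray :: "'a graph \<Rightarrow> (nat \<Rightarrow> 'a) \<Rightarrow> bool" where
  "ray H r \<longleftrightarrow> inj r \<and> (\<forall>i. r i \<in> verts H) \<and> (\<forall>i. {r i, r (Suc i)} \<in> edges H)"

definition has_tail_in :: "(nat \<Rightarrow> 'a) \<Rightarrow> 'a set \<Rightarrow> bool" where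
  "has_tail_in r C \<longleftrightarrow> (\<exists>k. \<forall>j\<ge>k. r j \<in> C)"

definition ray_equiv :: "'a graph \<Rightarrow> (nat \<Rightarrow> 'a) \<Rightarrow> (nat \<Rightarrow> 'a) \<Rightarrow> bool" where
  "ray_equiv H r s \<longleftrightarrow>
     (\<forall>S. finite S \<and> S \<subseteq> verts H \<longrightarrow>
        (\<exists>C\<in>components (del_verts H S). has_tail_in r C \<and> has_tail_in s C))"

definition ends :: "'a graph \<Rightarrow> (nat \<Rightarrow> 'a) set set" where
  "ends H = {{s. ray H s \<and> ray_equiv H r s} | r. ray H r}"

definition faithful :: "'a graph \<Rightarrow> 'a graph \<Rightarrow> bool" where
  "faithful A B \<longleftrightarrow>
     (\<forall>\<omega>\<in>ends B. \<exists>r\<in>\<omega>. ray A r) \<and>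
     (\<forall>r s. ray A r \<and> ray A s \<longrightarrow> (ray_equiv A r s \<longleftrightarrow> ray_equiv B r s))"

end

theory Submission
  imports Defs
begin


lemma verts_del[simp]: "verts (del_verts H S) = verts H - S"
  by (simp add: verts_def del_verts_def)
lemma edges_del[simp]: "edges (del_verts H S) = {e \<in> edges H. e \<inter> S = {}}"
  by (simp add: edges_def del_verts_def)
lemma verts_L[simp]: "verts (line_graph H) = edges H"
  by (simp add: verts_def line_graph_def)
lemma edges_L: "edges (line_graph H) = {{e, f} | e f. e \<in> edges H \<and> f \<in> edges H \<and> e \<noteq> f \<and> e \<inter> f \<noteq> {}}"
  by (simp add: edges_def line_graph_def)

lemma adj_sym: "adj K x y = adj K y x"
  by (simp add: adj_def insert_commute)

lemma rtc_sym: "(adj K)\<^sup>*\<^sup>* x y \<Longrightarrow> (adj K)\<^sup>*\<^sup>* y x"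
  by (metis adj_sym symp_def symp_rtranclp sympD)

lemma comp_iff: "C \<in> components K \<longleftrightarrow> (\<exists>x\<in>verts K. C = {y. (adj K)\<^sup>*\<^sup>* x y})"
  by (auto simp: components_def)

lemma comp_eq:
  assumes "C1 \<in> components K" "C2 \<in> components K" "w \<in> C1" "w \<in> C2"
  shows "C1 = C2"
proof -
  obtain x1 where x1: "C1 = {y. (adj K)\<^sup>*\<^sup>* x1 y}" using assms(1) by (auto simp: comp_iff)
  obtain x2 where x2: "C2 = {y. (adj K)\<^sup>*\<^sup>* x2 y}" using assms(2) by (auto simp: comp_iff)
  have a: "(adj K)\<^sup>*\<^sup>* x1 w" "(adj K)\<^sup>*\<^sup>* x2 w" using assms x1 x2 by auto
  have "(adj K)\<^sup>*\<^sup>* x1 x2" using a rtc_sym by (metis rtranclp_trans)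
  moreover have "(adj K)\<^sup>*\<^sup>* x2 x1" using a rtc_sym by (metis rtranclp_trans)
  ultimately show ?thesis unfolding x1 x2 by (auto intro: rtranclp_trans)
qed

lemma ray_equiv_sym: "ray_equiv H p q \<Longrightarrow> ray_equiv H q p"
  unfolding ray_equiv_def by blast

lemma tail_and: "has_tail_in p C \<Longrightarrow> has_tail_in q D \<Longrightarrow> \<exists>k. \<forall>j\<ge>k. p j \<in> C \<and> q j \<in> D"
  unfolding has_tail_in_def by (metis le_trans max.cobounded1 max.cobounded2)

lemma ray_equiv_trans:
  assumes "ray_equiv H p q" "ray_equiv H q s" shows "ray_equiv H p s"
  unfolding ray_equiv_def
proof (intro allI impI)
  fix S assume S: "finite S \<and> S \<subseteq> verts H"
  obtain C1 where C1: "C1 \<in> components (del_verts H S)" "has_tail_in p C1" "has_tail_in q C1"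
    using assms(1) S unfolding ray_equiv_def by blast
  obtain C2 where C2: "C2 \<in> components (del_verts H S)" "has_tail_in q C2" "has_tail_in s C2"
    using assms(2) S unfolding ray_equiv_def by blast
  obtain k where "\<forall>j\<ge>k. q j \<in> C1 \<and> q j \<in> C2" using tail_and[OF C1(3) C2(2)] by blast
  then have "C1 = C2" using comp_eq[OF C1(1) C2(1)] by blast
  then show "\<exists>C\<in>components (del_verts H S). has_tail_in p C \<and> has_tail_in s C" using C1 C2 by blast
qed

lemma ray_equiv_sub:
  assumes "ray_equiv H p q" "\<And>j. j \<le> idx j" shows "ray_equiv H p (\<lambda>j. q (idx j))"
  unfolding ray_equiv_def
proof (intro allI impI)
  fix S assume S: "finite S \<and> S \<subseteq> verts H"
  obtain C where C: "C \<in> components (del_verts H S)" "has_tail_in p C" "has_tail_in q C"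
    using assms(1) S unfolding ray_equiv_def by blast
  have "has_tail_in (\<lambda>j. q (idx j)) C" using C(3) assms(2) unfolding has_tail_in_def
    by (meson le_trans)
  then show "\<exists>C\<in>components (del_verts H S). has_tail_in p C \<and> has_tail_in (\<lambda>j. q (idx j)) C"
    using C by blast
qed

lemma ray_refl:
  assumes "ray K r" shows "ray_equiv K r r"
  unfolding ray_equiv_def
proof (intro allI impI)
  fix S assume S: "finite S \<and> S \<subseteq> verts K"
  have inj: "inj r" using assms by (simp add: ray_def)
  have "finite (r -` S)" using S inj by (simp add: finite_vimageI)
  then obtain k where k: "\<forall>j\<in>r -` S. j < k" using finite_nat_set_iff_bounded by blast
  have nk: "\<And>j. j \<ge> k \<Longrightarrow> r j \<notin> S" using k by (meson leD vimageI2)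
  have "(adj (del_verts K S))\<^sup>*\<^sup>* (r k) (r j)" if "k \<le> j" for j
    using that
  proof (induction j rule: dec_induct)
    case base then show ?case by simp
  next
    case (step n)
    have "adj (del_verts K S) (r n) (r (Suc n))"
      using assms nk[of n] nk[of "Suc n"] step(1) by (auto simp: adj_def ray_def)
    then show ?case using step(3) by (simp add: rtranclp.rtrancl_into_rtrancl)
  qed
  moreover have "r k \<in> verts (del_verts K S)" using assms nk[of k] by (simp add: ray_def)
  ultimately have "{y. (adj (del_verts K S))\<^sup>*\<^sup>* (r k) y} \<in> components (del_verts K S)"
    "has_tail_in r {y. (adj (del_verts K S))\<^sup>*\<^sup>* (r k) y}"
    unfolding comp_iff has_tail_in_def by auto
  then show "\<exists>C\<in>components (del_verts K S). has_tail_in r C \<and> has_tail_in r C" by blast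
qed



lemma edge_two: "is_graph H \<Longrightarrow> e \<in> edges H \<Longrightarrow> \<exists>u v. u \<noteq> v \<and> e = {u, v} \<and> u \<in> verts H \<and> v \<in> verts H"
  by (simp add: is_graph_def)

lemma edge_sub_verts: "is_graph H \<Longrightarrow> e \<in> edges H \<Longrightarrow> x \<in> e \<Longrightarrow> x \<in> verts H"
  using edge_two by fastforce

lemma edge_finite: "is_graph H \<Longrightarrow> e \<in> edges H \<Longrightarrow> finite e"
  using edge_two by fastforce

lemma edge_ne: "is_graph H \<Longrightarrow> e \<in> edges H \<Longrightarrow> \<exists>x. x \<in> e"
  using edge_two by fastforce

lemma rayL_D:
  assumes "ray (line_graph H) R"
  shows "inj R" "R i \<in> edges H" "R i \<inter> R (Suc i) \<noteq> {}"
proof -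
  show "inj R" "R i \<in> edges H" using assms by (auto simp: ray_def)
  have "{R i, R (Suc i)} \<in> edges (line_graph H)" using assms unfolding ray_def by blast
  then obtain e f where "{R i, R (Suc i)} = {e, f}" "e \<inter> f \<noteq> {}"
    unfolding edges_L by blast
  then show "R i \<inter> R (Suc i) \<noteq> {}" by (metis doubleton_eq_iff inf_commute)
qed

lemma rayL_I:
  assumes "inj R" "\<And>i. R i \<in> edges H" "\<And>i. R i \<inter> R (Suc i) \<noteq> {}"
  shows "ray (line_graph H) R"
proof -
  have "R i \<noteq> R (Suc i)" for i using assms(1) by (metis Suc_n_not_n injD)
  then have "{R i, R (Suc i)} \<in> edges (line_graph H)" for i
    unfolding edges_L mem_Collect_eq
    by (intro exI[of _ "R i"] exI[of _ "R (Suc i)"]) (simp add: assms)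
  then show ?thesis unfolding ray_def verts_L using assms by blast
qed

definition pv :: "(nat \<Rightarrow> 'a set) \<Rightarrow> nat \<Rightarrow> 'a" where
  "pv R i = (SOME v. v \<in> R i \<inter> R (Suc i))"

lemma pv_in:
  assumes "ray (line_graph H) R"
  shows "pv R i \<in> R i" "pv R i \<in> R (Suc i)"
proof -
  have "\<exists>v. v \<in> R i \<inter> R (Suc i)" using rayL_D(3)[OF assms] by blast
  then have "pv R i \<in> R i \<inter> R (Suc i)" unfolding pv_def by (rule someI_ex)
  then show "pv R i \<in> R i" "pv R i \<in> R (Suc i)" by auto
qed

lemma H0:
  assumes "is_graph H" "e \<in> edges H" "e \<inter> S = {}" "a \<in> e" "b \<in> e"
  shows "(adj (del_verts H S))\<^sup>*\<^sup>* a b"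
proof (cases "a = b")
  case True then show ?thesis by simp
next
  case False
  obtain u v where "u \<noteq> v" "e = {u, v}" using edge_two[OF assms(1,2)] by blast
  then have "e = {a, b}" using assms(4,5) False by auto
  then have "adj (del_verts H S) a b" using assms by (simp add: adj_def)
  then show ?thesis by simp
qed

lemma A2:
  assumes g: "is_graph H"
    and p: "(adj (del_verts (line_graph H) {e \<in> edges H. e \<inter> S \<noteq> {}}))\<^sup>*\<^sup>* e0 f"
    and e0: "e0 \<in> edges H" "e0 \<inter> S = {}" "x \<in> e0"
  shows "\<And>y. y \<in> f \<Longrightarrow> (adj (del_verts H S))\<^sup>*\<^sup>* x y"
  using p
proof (induction rule: rtranclp_induct)
  case base
  then show ?case using H0[OF g e0(1,2) e0(3)] by simp
next
  case (step f1 f2)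
  have st: "{f1, f2} \<in> edges (line_graph H)" "{f1, f2} \<inter> {e \<in> edges H. e \<inter> S \<noteq> {}} = {}"
    using step(2) unfolding adj_def edges_del by blast+
  from st(1) obtain a b where ab: "{f1, f2} = {a, b}" "a \<in> edges H" "b \<in> edges H" "a \<inter> b \<noteq> {}"
    unfolding edges_L by blast
  have nS': "f1 \<notin> {e \<in> edges H. e \<inter> S \<noteq> {}}" "f2 \<notin> {e \<in> edges H. e \<inter> S \<noteq> {}}"
    using st(2) by blast+
  have f12: "f1 \<in> edges H" "f2 \<in> edges H" "f1 \<inter> f2 \<noteq> {}" using ab
    by (metis doubleton_eq_iff inf_commute)+
  have nS: "f1 \<inter> S = {}" "f2 \<inter> S = {}" using nS' f12 by auto
  obtain z where z: "z \<in> f1" "z \<in> f2" using f12(3) by blast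
  have "(adj (del_verts H S))\<^sup>*\<^sup>* x z" using step(3) z by blast
  moreover have "(adj (del_verts H S))\<^sup>*\<^sup>* z y" using H0[OF g f12(2) nS(2) z(2) step(4)] .
  ultimately show ?case by (rule rtranclp_trans)
qed

lemma H1:
  assumes "e \<in> edges H" "f \<in> edges H" "e \<notin> S'" "f \<notin> S'" "e \<inter> f \<noteq> {}"
  shows "(adj (del_verts (line_graph H) S'))\<^sup>*\<^sup>* e f"
proof (cases "e = f")
  case True then show ?thesis by simp
next
  case False
  have "{e, f} \<in> edges (line_graph H)" unfolding edges_L using assms False by blast
  moreover have "{e, f} \<inter> S' = {}" using assms by blast
  ultimately have "adj (del_verts (line_graph H) S') e f" unfolding adj_def edges_del by blast
  then show ?thesis by simp
qed

lemma A3: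
  assumes sub: "S' \<subseteq> edges H"
    and p: "(adj (del_verts H (\<Union>S')))\<^sup>*\<^sup>* x y"
    and e: "e \<in> edges H" "e \<notin> S'" "x \<in> e"
  shows "\<And>f. f \<in> edges H \<Longrightarrow> f \<notin> S' \<Longrightarrow> y \<in> f \<Longrightarrow> (adj (del_verts (line_graph H) S'))\<^sup>*\<^sup>* e f"
  using p
proof (induction rule: rtranclp_induct)
  case base
  then show ?case using H1[of e H f S'] e by blast
next
  case (step y z f)
  have g: "{y, z} \<in> edges H" "{y, z} \<inter> \<Union>S' = {}" using step(2) by (auto simp: adj_def)
  have gn: "{y, z} \<notin> S'" using g(2) by auto
  have "(adj (del_verts (line_graph H) S'))\<^sup>*\<^sup>* e {y, z}" using step(3)[OF g(1) gn] by simp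
  moreover have "(adj (del_verts (line_graph H) S'))\<^sup>*\<^sup>* {y, z} f"
    using H1[OF g(1) step(4) gn step(5)] step(6) by blast
  ultimately show ?case by (rule rtranclp_trans)
qed



lemma H2: "(adj (del_verts H S))\<^sup>*\<^sup>* z y \<Longrightarrow> z \<notin> S \<Longrightarrow> y \<notin> S"
  by (induction rule: rtranclp_induct) (auto simp: adj_def)

lemma claimA_fwd:
  assumes g: "is_graph H" and lf: "locally_finite H"
    and R: "ray (line_graph H) R" and Q: "ray (line_graph H) Q"
    and E: "ray_equiv (line_graph H) R Q"
  shows "ray_equiv H (pv R) (pv Q)"
  unfolding ray_equiv_def
proof (intro allI impI)
  fix S assume S: "finite S \<and> S \<subseteq> verts H"
  define S' where "S' = {e \<in> edges H. e \<inter> S \<noteq> {}}"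
  have "S' = (\<Union>v\<in>S. {e \<in> edges H. v \<in> e})" unfolding S'_def by auto
  moreover have "finite {e \<in> edges H. v \<in> e}" if "v \<in> S" for v
    using lf S that unfolding locally_finite_def by blast
  ultimately have fS': "finite S'" using S by simp
  have "S' \<subseteq> verts (line_graph H)" unfolding S'_def by auto
  then obtain C' where C': "C' \<in> components (del_verts (line_graph H) S')"
      "has_tail_in R C'" "has_tail_in Q C'"
    using E fS' unfolding ray_equiv_def by blast
  obtain e0 where e0: "e0 \<in> edges H" "e0 \<notin> S'" and C'e: "C' = {y. (adj (del_verts (line_graph H) S'))\<^sup>*\<^sup>* e0 y}"
    using C'(1) unfolding comp_iff by auto
  have e0S: "e0 \<inter> S = {}" using e0 unfolding S'_def by auto
  obtain z where z: "z \<in> e0" using edge_ne[OF g e0(1)] by blast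
  have zv: "z \<in> verts (del_verts H S)" using edge_sub_verts[OF g e0(1) z] z e0S by auto
  define C where "C = {y. (adj (del_verts H S))\<^sup>*\<^sup>* z y}"
  have Cc: "C \<in> components (del_verts H S)" unfolding C_def comp_iff using zv by blast
  have tl: "has_tail_in (pv X) C" if X: "ray (line_graph H) X" "has_tail_in X C'" for X
  proof -
    obtain k where k: "\<forall>j\<ge>k. X j \<in> C'" using X(2) unfolding has_tail_in_def by blast
    have "pv X j \<in> C" if "j \<ge> k" for j
    proof -
      have "(adj (del_verts (line_graph H) S'))\<^sup>*\<^sup>* e0 (X j)" using k that C'e by blast
      then show ?thesis unfolding C_def
        using A2[OF g _ e0(1) e0S z, of "X j" "pv X j"] pv_in(1)[OF X(1)] unfolding S'_def by blast
    qed
    then show ?thesis unfolding has_tail_in_def by blast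
  qed
  show "\<exists>C\<in>components (del_verts H S). has_tail_in (pv R) C \<and> has_tail_in (pv Q) C"
    using Cc tl[OF R C'(2)] tl[OF Q C'(3)] by blast
qed

lemma claimA_bwd:
  assumes g: "is_graph H"
    and R: "ray (line_graph H) R" and Q: "ray (line_graph H) Q"
    and E: "ray_equiv H (pv R) (pv Q)"
  shows "ray_equiv (line_graph H) R Q"
  unfolding ray_equiv_def
proof (intro allI impI)
  fix S' assume S': "finite S' \<and> S' \<subseteq> verts (line_graph H)"
  then have S'e: "S' \<subseteq> edges H" by simp
  define S where "S = \<Union>S'"
  have fS: "finite S" unfolding S_def using S' edge_finite[OF g] by auto
  have SV: "S \<subseteq> verts H" unfolding S_def using S'e edge_sub_verts[OF g] by blast
  obtain C where C: "C \<in> components (del_verts H S)" "has_tail_in (pv R) C" "has_tail_in (pv Q) C"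
    using E fS SV unfolding ray_equiv_def by blast
  obtain z where z: "z \<in> verts H" "z \<notin> S" and Ce: "C = {y. (adj (del_verts H S))\<^sup>*\<^sup>* z y}"
    using C(1) unfolding comp_iff by auto
  obtain k1 where k1: "\<forall>j\<ge>k1. pv R j \<in> C" using C(2) unfolding has_tail_in_def by blast
  obtain k2 where k2: "\<forall>j\<ge>k2. pv Q j \<in> C" using C(3) unfolding has_tail_in_def by blast
  have notS': "X j \<notin> S'" if X: "ray (line_graph H) X" "pv X j \<in> C" for X j
  proof
    assume "X j \<in> S'"
    then have "pv X j \<in> S" unfolding S_def using pv_in(1)[OF X(1)] by blast
    moreover have "pv X j \<notin> S" using H2[of H S z "pv X j"] X(2) Ce z(2) by blast
    ultimately show False by blast
  qed
  define e0 where "e0 = R k1"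
  have e0: "e0 \<in> edges H" "e0 \<notin> S'" "pv R k1 \<in> e0"
    unfolding e0_def using rayL_D(2)[OF R] notS'[OF R] k1 pv_in(1)[OF R] by auto
  have reach: "(adj (del_verts (line_graph H) S'))\<^sup>*\<^sup>* e0 (X j)"
    if X: "ray (line_graph H) X" "pv X j \<in> C" for X j
  proof -
    have "(adj (del_verts H S))\<^sup>*\<^sup>* z (pv R k1)" using k1 Ce by blast
    then have "(adj (del_verts H S))\<^sup>*\<^sup>* (pv R k1) z" by (rule rtc_sym)
    moreover have "(adj (del_verts H S))\<^sup>*\<^sup>* z (pv X j)" using X(2) Ce by blast
    ultimately have p: "(adj (del_verts H (\<Union>S')))\<^sup>*\<^sup>* (pv R k1) (pv X j)"
      unfolding S_def by (rule rtranclp_trans)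
    show ?thesis using A3[OF S'e p e0 rayL_D(2)[OF X(1)] notS'[OF X] pv_in(1)[OF X(1)]] .
  qed
  define C' where "C' = {f. (adj (del_verts (line_graph H) S'))\<^sup>*\<^sup>* e0 f}"
  have "C' \<in> components (del_verts (line_graph H) S')" unfolding C'_def comp_iff using e0 by auto
  moreover have "has_tail_in R C'" unfolding has_tail_in_def C'_def using reach[OF R] k1 by blast
  moreover have "has_tail_in Q C'" unfolding has_tail_in_def C'_def using reach[OF Q] k2 by blast
  ultimately show "\<exists>C\<in>components (del_verts (line_graph H) S'). has_tail_in R C \<and> has_tail_in Q C"
    by blast
qed



definition lastv :: "(nat \<Rightarrow> 'a) \<Rightarrow> nat \<Rightarrow> nat" where
  "lastv p i = Max {j. p j = p i}"

fun idx :: "(nat \<Rightarrow> 'a) \<Rightarrow> nat \<Rightarrow> nat" where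
  "idx p 0 = lastv p 0"
| "idx p (Suc k) = lastv p (Suc (idx p k))"

definition extr :: "(nat \<Rightarrow> 'a) \<Rightarrow> nat \<Rightarrow> 'a" where
  "extr p k = p (idx p k)"

context
  fixes p :: "nat \<Rightarrow> 'a"
  assumes fin: "\<And>i. finite {j. p j = p i}"
begin

lemma lastv_eq: "p (lastv p i) = p i"
proof -
  have "lastv p i \<in> {j. p j = p i}" unfolding lastv_def using fin by (intro Max_in) auto
  then show ?thesis by simp
qed

lemma lastv_ge: "i \<le> lastv p i"
  unfolding lastv_def using fin by (intro Max_ge) auto

lemma lastv_gt: "lastv p i < j \<Longrightarrow> p j \<noteq> p i"
proof
  assume "lastv p i < j" "p j = p i"
  then have "j \<le> lastv p i" unfolding lastv_def using fin by (intro Max_ge) auto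
  then show False using \<open>lastv p i < j\<close> by simp
qed

lemma idx_last: "idx p k < j \<Longrightarrow> p j \<noteq> p (idx p k)"
  by (cases k) (auto simp: lastv_eq dest: lastv_gt)

lemma idx_Suc: "idx p k < idx p (Suc k)"
  using lastv_ge[of "Suc (idx p k)"] by simp

lemma idx_mono: "strict_mono (idx p)"
  using idx_Suc by (simp add: strict_mono_Suc_iff)

lemma idx_ge: "k \<le> idx p k"
  using idx_mono by (simp add: strict_mono_imp_increasing)

lemma extr_inj: "inj (extr p)"
proof (rule injI)
  fix a b assume e: "extr p a = extr p b"
  show "a = b"
  proof (rule ccontr)
    assume "a \<noteq> b"
    then consider "a < b" | "b < a" by linarith
    then show False
    proof cases
      case 1 then have "idx p a < idx p b" using idx_mono by (simp add: strict_mono_less)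
      then have "p (idx p b) \<noteq> p (idx p a)" by (rule idx_last)
      then show False using e unfolding extr_def by simp
    next
      case 2 then have "idx p b < idx p a" using idx_mono by (simp add: strict_mono_less)
      then have "p (idx p a) \<noteq> p (idx p b)" by (rule idx_last)
      then show False using e unfolding extr_def by simp
    qed
  qed
qed

lemma extr_Suc: "extr p (Suc k) = p (Suc (idx p k))"
  unfolding extr_def by (simp add: lastv_eq)

lemma extr_ray:
  assumes v: "\<And>i. p i \<in> verts H" and w: "\<And>i. p i \<noteq> p (Suc i) \<Longrightarrow> {p i, p (Suc i)} \<in> edges H"
  shows "ray H (extr p)"
proof -
  have "{extr p k, extr p (Suc k)} \<in> edges H" for k
  proof -
    have "p (Suc (idx p k)) \<noteq> p (idx p k)" using idx_last by simp
    then show ?thesis using w[of "idx p k"] unfolding extr_Suc by (simp add: extr_def)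
  qed
  then show ?thesis unfolding ray_def using extr_inj v by (simp add: extr_def)
qed

end

lemma pv_props:
  assumes g: "is_graph H" and lf: "locally_finite H" and R: "ray (line_graph H) R"
  shows "\<And>i. pv R i \<in> verts H" "\<And>i. pv R i \<noteq> pv R (Suc i) \<Longrightarrow> {pv R i, pv R (Suc i)} \<in> edges H"
    "\<And>i. finite {j. pv R j = pv R i}"
proof -
  fix i
  show v: "pv R i \<in> verts H" using edge_sub_verts[OF g rayL_D(2)[OF R] pv_in(1)[OF R]] .
  show "pv R i \<noteq> pv R (Suc i) \<Longrightarrow> {pv R i, pv R (Suc i)} \<in> edges H"
  proof -
    assume ne: "pv R i \<noteq> pv R (Suc i)"
    obtain u v where uv: "u \<noteq> v" "R (Suc i) = {u, v}" using edge_two[OF g rayL_D(2)[OF R]] by blast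
    have "pv R i \<in> R (Suc i)" "pv R (Suc i) \<in> R (Suc i)" using pv_in[OF R] by auto
    then have "R (Suc i) = {pv R i, pv R (Suc i)}" using uv ne by auto
    then show ?thesis using rayL_D(2)[OF R, of "Suc i"] by simp
  qed
  have "{j. pv R j = pv R i} \<subseteq> R -` {e \<in> edges H. pv R i \<in> e}"
  proof (intro subsetI)
    fix j assume "j \<in> {j. pv R j = pv R i}"
    then have "pv R j = pv R i" by simp
    then show "j \<in> R -` {e \<in> edges H. pv R i \<in> e}"
      using pv_in(1)[OF R, of j] rayL_D(2)[OF R, of j] by simp
  qed
  moreover have "finite (R -` {e \<in> edges H. pv R i \<in> e})"
  proof -
    have "finite {e \<in> edges H. pv R i \<in> e}" using lf v unfolding locally_finite_def by blast
    then show ?thesis using rayL_D(1)[OF R] by (rule finite_vimageI)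
  qed
  ultimately show "finite {j. pv R j = pv R i}" by (rule finite_subset)
qed

lemma pv_extr:
  assumes g: "is_graph H" and lf: "locally_finite H" and R: "ray (line_graph H) R"
  shows "ray H (extr (pv R))" "ray_equiv H (pv R) (extr (pv R))"
proof -
  note P = pv_props[OF g lf R]
  show "ray H (extr (pv R))" using extr_ray[OF P(3) P(1) P(2)] by blast
  have "ray_equiv H (pv R) (pv R)"
    using claimA_fwd[OF g lf R R ray_refl[OF R]] .
  moreover have "extr (pv R) = (\<lambda>j. pv R (idx (pv R) j))" by (rule ext) (simp add: extr_def)
  ultimately show "ray_equiv H (pv R) (extr (pv R))"
    using ray_equiv_sub[of H "pv R" "pv R" "idx (pv R)"] idx_ge[OF P(3)] by simp
qed



lemma sub_lf: "subgraph F G \<Longrightarrow> locally_finite G \<Longrightarrow> locally_finite F"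
  unfolding locally_finite_def subgraph_def
proof (intro ballI)
  fix v assume a: "is_graph F \<and> is_graph G \<and> verts F \<subseteq> verts G \<and> edges F \<subseteq> edges G"
    "\<forall>v\<in>verts G. finite {e \<in> edges G. v \<in> e}" "v \<in> verts F"
  then have "finite {e \<in> edges G. v \<in> e}" by blast
  moreover have "{e \<in> edges F. v \<in> e} \<subseteq> {e \<in> edges G. v \<in> e}" using a(1) by blast
  ultimately show "finite {e \<in> edges F. v \<in> e}" using finite_subset by blast
qed

lemma ray_mono: "subgraph F G \<Longrightarrow> ray F r \<Longrightarrow> ray G r"
  unfolding ray_def subgraph_def by blast

lemma rayL_mono: assumes "subgraph F G" "ray (line_graph F) R" shows "ray (line_graph G) R"
  using rayL_D[OF assms(2)] assms(1) unfolding subgraph_def by (intro rayL_I) auto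

lemma line_ray:
  assumes s: "ray F s"
  shows "ray (line_graph F) (\<lambda>i. {s i, s (Suc i)})" "pv (\<lambda>i. {s i, s (Suc i)}) = (\<lambda>i. s (Suc i))"
proof -
  have inj: "inj s" using s by (simp add: ray_def)
  have d: "s a = s b \<longleftrightarrow> a = b" for a b using inj by (meson injD)
  show "ray (line_graph F) (\<lambda>i. {s i, s (Suc i)})"
  proof (rule rayL_I)
    show "inj (\<lambda>i. {s i, s (Suc i)})"
    proof (rule injI)
      fix a b assume "{s a, s (Suc a)} = {s b, s (Suc b)}"
      then have "(s a = s b \<and> s (Suc a) = s (Suc b)) \<or> (s a = s (Suc b) \<and> s (Suc a) = s b)"
        by (simp add: doubleton_eq_iff)
      then show "a = b" unfolding d by auto
    qed
    show "\<And>i. {s i, s (Suc i)} \<in> edges F" using s by (simp add: ray_def)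
    show "\<And>i. {s i, s (Suc i)} \<inter> {s (Suc i), s (Suc (Suc i))} \<noteq> {}" by auto
  qed
  then have r: "ray (line_graph F) (\<lambda>i. {s i, s (Suc i)})" .
  show "pv (\<lambda>i. {s i, s (Suc i)}) = (\<lambda>i. s (Suc i))"
  proof
    fix i
    have "pv (\<lambda>i. {s i, s (Suc i)}) i \<in> {s i, s (Suc i)}" "pv (\<lambda>i. {s i, s (Suc i)}) i \<in> {s (Suc i), s (Suc (Suc i))}"
      using pv_in[OF r, of i] by auto
    moreover have "s i \<noteq> s (Suc (Suc i))" unfolding d by simp
    ultimately show "pv (\<lambda>i. {s i, s (Suc i)}) i = s (Suc i)" by auto
  qed
qed

lemma swap:
  assumes "ray_equiv H a r" "ray_equiv H b q"
  shows "ray_equiv H a b \<longleftrightarrow> ray_equiv H r q"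
proof
  assume "ray_equiv H a b"
  then have "ray_equiv H r b" using ray_equiv_trans[OF ray_equiv_sym[OF assms(1)]] by blast
  then show "ray_equiv H r q" using ray_equiv_trans assms(2) by blast
next
  assume "ray_equiv H r q"
  then have "ray_equiv H a q" using ray_equiv_trans[OF assms(1)] by blast
  then show "ray_equiv H a b" using ray_equiv_trans ray_equiv_sym[OF assms(2)] by blast
qed

theorem lemma27:
  fixes G F :: "'a graph"
  assumes "is_graph G" and "locally_finite G" and "subgraph F G"
    and "faithful F G"
  shows "faithful (line_graph F) (line_graph G)"
proof -
  note gG = assms(1) and lfG = assms(2) and sub = assms(3)
  have gF: "is_graph F" using sub by (simp add: subgraph_def)
  have lfF: "locally_finite F" using sub_lf[OF sub lfG] .
  have f1: "\<forall>\<omega>\<in>ends G. \<exists>r\<in>\<omega>. ray F r"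
    using assms(4) unfolding faithful_def by (rule conjunct1)
  have f2: "ray_equiv F r s \<longleftrightarrow> ray_equiv G r s" if "ray F r" "ray F s" for r s
    using assms(4) that unfolding faithful_def by simp
  have P1: "\<exists>r\<in>\<omega>. ray (line_graph F) r" if w: "\<omega> \<in> ends (line_graph G)" for \<omega>
  proof -
    obtain r0 where r0: "ray (line_graph G) r0"
      and we: "\<omega> = {s. ray (line_graph G) s \<and> ray_equiv (line_graph G) r0 s}"
      using w unfolding ends_def by blast
    define r where "r = extr (pv r0)"
    have r: "ray G r" "ray_equiv G (pv r0) r" unfolding r_def using pv_extr[OF gG lfG r0] by auto
    have "{s. ray G s \<and> ray_equiv G r s} \<in> ends G" unfolding ends_def using r(1) by blast
    then have "\<exists>s\<in>{s. ray G s \<and> ray_equiv G r s}. ray F s" by (rule bspec[OF f1])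
    then obtain s where s: "ray G s" "ray_equiv G r s" "ray F s" by blast
    define R' where "R' = (\<lambda>i. {s i, s (Suc i)})"
    have R'F: "ray (line_graph F) R'" and pvR': "pv R' = (\<lambda>i. s (Suc i))"
      unfolding R'_def using line_ray[OF s(3)] by auto
    have R'G: "ray (line_graph G) R'" using rayL_mono[OF sub R'F] .
    have "ray_equiv G s (\<lambda>i. s (Suc i))" using ray_equiv_sub[OF ray_refl[OF s(1)], of Suc] by simp
    then have "ray_equiv G (pv r0) (pv R')"
      unfolding pvR' using ray_equiv_trans[OF ray_equiv_trans[OF r(2) s(2)]] by simp
    then have "ray_equiv (line_graph G) r0 R'" using claimA_bwd[OF gG r0 R'G] by blast
    then have "R' \<in> \<omega>" using we R'G by blast
    then show ?thesis using R'F by blast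
  qed
  have P2: "ray_equiv (line_graph F) R Q \<longleftrightarrow> ray_equiv (line_graph G) R Q"
    if R: "ray (line_graph F) R" and Q: "ray (line_graph F) Q" for R Q
  proof -
    have RG: "ray (line_graph G) R" and QG: "ray (line_graph G) Q" using rayL_mono[OF sub] R Q by auto
    define r where "r = extr (pv R)"
    define q where "q = extr (pv Q)"
    have rF: "ray F r" "ray_equiv F (pv R) r" unfolding r_def using pv_extr[OF gF lfF R] by auto
    have qF: "ray F q" "ray_equiv F (pv Q) q" unfolding q_def using pv_extr[OF gF lfF Q] by auto
    have rG: "ray_equiv G (pv R) r" unfolding r_def using pv_extr[OF gG lfG RG] by auto
    have qG: "ray_equiv G (pv Q) q" unfolding q_def using pv_extr[OF gG lfG QG] by auto
    have "ray_equiv (line_graph F) R Q \<longleftrightarrow> ray_equiv F (pv R) (pv Q)"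
      using claimA_fwd[OF gF lfF R Q] claimA_bwd[OF gF R Q] by blast
    also have "\<dots> \<longleftrightarrow> ray_equiv F r q"
      using swap[OF rF(2) qF(2)] .
    also have "\<dots> \<longleftrightarrow> ray_equiv G r q" using f2[OF rF(1) qF(1)] .
    also have "\<dots> \<longleftrightarrow> ray_equiv G (pv R) (pv Q)"
      using swap[OF rG qG] by simp
    also have "\<dots> \<longleftrightarrow> ray_equiv (line_graph G) R Q"
      using claimA_fwd[OF gG lfG RG QG] claimA_bwd[OF gG RG QG] by blast
    finally show ?thesis .
  qed
  show ?thesis unfolding faithful_def using P1 P2 by simp
qed


end
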